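(* The stabilizer of $(1,0,0,0)$ in the group $\langle H^\infty,\iota\rangle$ is $\langle H^\infty[3],\iota\rangle$, where $H^\infty[3]$ acts on $\mathbb{R}^4$ fixing the first coordinate.
   Context: Let $\tau=(1+\sqrt5)/2$, $\tau'=(1-\sqrt5)/2$. Let $\Delta\subset\mathbb{R}^4$ be the set of 120 vectors consisting of: the 8 vectors obtained from $(\pm1,0,0,0)$ by permuting coordinates; the 16 vectors $\frac12(\pm1,\pm1,\pm1,\pm1)$; and the 96 vectors obtained from $\frac12(0,\pm1,\pm\tau',\pm\tau)$ (all sign choices) by even permutations of the coordinates; $\Delta'$ is its image under $\tau\leftrightarrow\tau'$ in each coordinate. For a unit vector $a$, $r_a(x)=x-2(x\cdot a)a$; $H^\infty$ is the group generated by $r_a$, $a\in\Delta\cup\Delta'$. Let $V=\{x\in\mathbb{R}^4:x_1=0\}$, $\Delta[3]=\Delta\cap V$, $\Delta[3]'=\Delta'\cap V$, and $H^\infty[3]$ the group generated by $r_a$, $a\in\Delta[3]\cup\Delta[3]'$. Let $\iota$ be the linear map $(x_1,x_2,x_3,x_4)\mapsto(x_1,x_2,x_4,x_3)$. *)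

theory Defs
  imports "HOL-Analysis.Analysis" "HOL-Combinatorics.Permutations"
begin

definition tau :: real where "tau = (1 + sqrt 5) / 2"
definition tau' :: real where "tau' = (1 - sqrt 5) / 2"

text \<open>The 120 vectors, parametrised by the pair (t, t'); Delta tau tau' is the set
  in the paper and Delta tau' tau is its image under the swap tau <-> tau'.\<close>
definition Delta :: "real \<Rightarrow> real \<Rightarrow> (real^4) set" where
  "Delta t t' =
     {v. \<exists>i. \<exists>s\<in>{-1,1::real}. v = s *\<^sub>R axis i 1}
   \<union> {v. \<exists>s1\<in>{-1,1::real}. \<exists>s2\<in>{-1,1::real}. \<exists>s3\<in>{-1,1::real}. \<exists>s4\<in>{-1,1::real}.
          v = vector [s1/2, s2/2, s3/2, s4/2]}
   \<union> {v. \<exists>s1\<in>{-1,1::real}. \<exists>s2\<in>{-1,1::real}. \<exists>s3\<in>{-1,1::real}. \<exists>p.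
          p permutes (UNIV :: 4 set) \<and> evenperm p \<and>
          v = (\<chi> i. (vector [0, s1/2, s2*t'/2, s3*t/2] :: real^4) $ p i)}"

definition DeltaP :: "(real^4) set" where "DeltaP = Delta tau tau'"
definition DeltaP' :: "(real^4) set" where "DeltaP' = Delta tau' tau"

definition refl_map :: "real^4 \<Rightarrow> real^4 \<Rightarrow> real^4" where
  "refl_map a x = x - (2 * (x \<bullet> a)) *\<^sub>R a"

definition Vsub :: "(real^4) set" where "Vsub = {x. x $ 1 = 0}"

definition iota :: "real^4 \<Rightarrow> real^4" where
  "iota x = vector [x $ 1, x $ 2, x $ 4, x $ 3]"

inductive_set gen_group :: "('a \<Rightarrow> 'a) set \<Rightarrow> ('a \<Rightarrow> 'a) set" for S where
  gen_id: "id \<in> gen_group S"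
| gen_gen: "f \<in> S \<Longrightarrow> f \<in> gen_group S"
| gen_comp: "f \<in> gen_group S \<Longrightarrow> g \<in> gen_group S \<Longrightarrow> f \<circ> g \<in> gen_group S"
| gen_inv: "f \<in> gen_group S \<Longrightarrow> inv f \<in> gen_group S"

definition Hinf :: "(real^4 \<Rightarrow> real^4) set" where
  "Hinf = gen_group (refl_map ` (DeltaP \<union> DeltaP'))"

definition Hinf3 :: "(real^4 \<Rightarrow> real^4) set" where
  "Hinf3 = gen_group (refl_map ` ((DeltaP \<inter> Vsub) \<union> (DeltaP' \<inter> Vsub)))"

end

theory Submission
  imports Defs
begin

lemma vector_4 [simp]:
 "(vector [x,y,z,w] ::('a::zero)^4)$1 = x"
 "(vector [x,y,z,w] ::('a::zero)^4)$2 = y"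
 "(vector [x,y,z,w] ::('a::zero)^4)$3 = z"
 "(vector [x,y,z,w] ::('a::zero)^4)$4 = w"
  unfolding vector_def by simp_all

definition qmul :: "real^4 \<Rightarrow> real^4 \<Rightarrow> real^4" where
 "qmul x y = vector [x$1*y$1 - x$2*y$2 - x$3*y$3 - x$4*y$4,
                     x$1*y$2 + x$2*y$1 + x$3*y$4 - x$4*y$3,
                     x$1*y$3 - x$2*y$4 + x$3*y$1 + x$4*y$2,
                     x$1*y$4 + x$2*y$3 - x$3*y$2 + x$4*y$1]"
definition qcnj :: "real^4 \<Rightarrow> real^4" where
 "qcnj x = vector [x$1, -x$2, -x$3, -x$4]"
abbreviation one4 :: "real^4" where "one4 \<equiv> axis 1 1"

lemma axis4 [simp]: "(axis 1 1 :: real^4) $ 1 = 1" "(axis 1 1 :: real^4) $ 2 = 0"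
  "(axis 1 1 :: real^4) $ 3 = 0" "(axis 1 1 :: real^4) $ 4 = 0"
  by (simp_all add: axis_def)

lemmas qs = vec_eq_iff forall_4 qmul_def qcnj_def inner_vec_def sum_4 iota_def refl_map_def

lemma qassoc: "qmul (qmul x y) z = qmul x (qmul y z)"
  by (simp add: qs algebra_simps)
lemma qcnj_mul: "qcnj (qmul x y) = qmul (qcnj y) (qcnj x)"
  by (simp add: qs algebra_simps)
lemma qcnj_cnj[simp]: "qcnj (qcnj x) = x"
  by (simp add: qs)
lemma q_mul_cnj: "qmul x (qcnj x) = (x \<bullet> x) *\<^sub>R one4"
  by (simp add: qs algebra_simps power2_eq_square)
lemma q_cnj_mul: "qmul (qcnj x) x = (x \<bullet> x) *\<^sub>R one4"
  by (simp add: qs algebra_simps power2_eq_square)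
lemma q_one[simp]: "qmul one4 x = x" "qmul x one4 = x"
  by (simp_all add: qs)
lemma q_scale[simp]: "qmul (c *\<^sub>R x) y = c *\<^sub>R qmul x y" "qmul x (c *\<^sub>R y) = c *\<^sub>R qmul x y"
  by (simp_all add: qs algebra_simps)
lemma q_neg[simp]: "qmul (-x) y = - qmul x y" "qmul x (-y) = - qmul x y" "qcnj (-x) = - qcnj x"
  by (simp_all add: qs algebra_simps)
lemma q_refl: "qmul (qmul a (qcnj x)) a = (2 * (x \<bullet> a)) *\<^sub>R a - (a \<bullet> a) *\<^sub>R x"
  by (simp add: qs algebra_simps)
lemma refl_q: "a \<bullet> a = 1 \<Longrightarrow> refl_map a x = - qmul (qmul a (qcnj x)) a"
  by (simp add: q_refl refl_map_def)
lemma iota_mul: "iota (qmul x y) = qmul (iota y) (iota x)"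
  by (simp add: qs algebra_simps)
lemma iota_cnj: "iota (qcnj x) = qcnj (iota x)"
  by (simp add: qs)
lemma iota_iota[simp]: "iota (iota x) = x"
  by (simp add: qs)
lemma iota_one[simp]: "iota one4 = one4"
  by (simp add: qs)
lemma iota_inner: "iota x \<bullet> iota x = x \<bullet> x"
  by (simp add: qs)
lemma cnj_inner: "qcnj x \<bullet> qcnj x = x \<bullet> x"
  by (simp add: qs)
lemma refl_invol: "a \<bullet> a = 1 \<Longrightarrow> refl_map a (refl_map a x) = x"
  by (simp add: refl_map_def inner_diff_left algebra_simps)
lemma iota_fix: "iota one4 = one4" by simp
lemma q_norm_mul: "qmul x y \<bullet> qmul x y = (x \<bullet> x) * (y \<bullet> y)"
proof -
  have "(qmul x y \<bullet> qmul x y) *\<^sub>R one4 = qmul (qmul x y) (qcnj (qmul x y))" by (simp add: q_mul_cnj)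
  also have "\<dots> = qmul x (qmul (qmul y (qcnj y)) (qcnj x))" by (simp add: qcnj_mul qassoc)
  also have "\<dots> = ((x \<bullet> x) * (y \<bullet> y)) *\<^sub>R one4" by (simp add: q_mul_cnj)
  finally have "(qmul x y \<bullet> qmul x y) *\<^sub>R one4 $ 1 = ((x \<bullet> x) * (y \<bullet> y)) *\<^sub>R one4 $ 1" by simp
  then show ?thesis by simp
qed

definition pr :: "real \<Rightarrow> real \<Rightarrow> bool" where
  "pr t t' \<longleftrightarrow> (t = tau \<and> t' = tau') \<or> (t = tau' \<and> t' = tau)"

lemma tau_sum: "tau + tau' = 1" by (simp add: tau_def tau'_def field_simps)
lemma tau_prod: "tau * tau' = -1"
proof -
  have "(1 + sqrt 5) * (1 - sqrt 5) = 1 - sqrt 5 * sqrt 5" by (simp add: algebra_simps)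
  also have "\<dots> = -4" by simp
  finally show ?thesis by (simp add: tau_def tau'_def)
qed

lemma pr_sym: "pr t t' \<Longrightarrow> pr t' t" by (auto simp: pr_def)
lemma pr_sum: "pr t t' \<Longrightarrow> t + t' = 1" using tau_sum by (auto simp: pr_def)
lemma pr_prod: "pr t t' \<Longrightarrow> t * t' = -1" using tau_prod by (auto simp: pr_def algebra_simps)
lemma pr_sq: "pr t t' \<Longrightarrow> t' = 1 - t \<and> t * t = t + 1"
proof -
  assume h: "pr t t'"
  have a: "t' = 1 - t" using pr_sum[OF h] by simp
  have "t * (1 - t) = -1" using pr_prod[OF h] a by simp
  then show ?thesis using a by (simp add: algebra_simps)
qed

definition D :: "(real^4) set" where "D = DeltaP \<union> DeltaP'"
definition DV :: "(real^4) set" where "DV = (DeltaP \<inter> Vsub) \<union> (DeltaP' \<inter> Vsub)"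

lemma pr_D: "pr t t' \<Longrightarrow> Delta t t' \<subseteq> D"
  by (auto simp: pr_def D_def DeltaP_def DeltaP'_def)
lemma pr_DV: "pr t t' \<Longrightarrow> a \<in> Delta t t' \<Longrightarrow> a $ 1 = 0 \<Longrightarrow> a \<in> DV"
  using pr_D by (auto simp: D_def DV_def Vsub_def)
lemma D_cases: "a \<in> D \<Longrightarrow> \<exists>t t'. pr t t' \<and> a \<in> Delta t t'"
  by (auto simp: pr_def D_def DeltaP_def DeltaP'_def)
lemma DV_D: "a \<in> DV \<Longrightarrow> a \<in> D \<and> a $ 1 = 0"
  by (auto simp: D_def DV_def Vsub_def)

lemma vec_chi4: fixes p :: "4 \<Rightarrow> 4" shows "(\<chi> i. (b::real^4) $ p i) = vector [b $ p 1, b $ p 2, b $ p 3, b $ p 4]"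
  by (simp add: vec_eq_iff forall_4)

lemma Delta_disj: "a \<in> Delta t t' \<Longrightarrow>
   (\<exists>i. \<exists>s\<in>{-1,1::real}. a = s *\<^sub>R axis i 1)
 \<or> (\<exists>s1\<in>{-1,1::real}. \<exists>s2\<in>{-1,1::real}. \<exists>s3\<in>{-1,1::real}. \<exists>s4\<in>{-1,1::real}.
          a = vector [s1/2, s2/2, s3/2, s4/2])
 \<or> (\<exists>s1\<in>{-1,1::real}. \<exists>s2\<in>{-1,1::real}. \<exists>s3\<in>{-1,1::real}. \<exists>p.
          p permutes (UNIV :: 4 set) \<and> evenperm p \<and>
          a = (\<chi> i. (vector [0, s1/2, s2*t'/2, s3*t/2] :: real^4) $ p i))"
  unfolding Delta_def by (simp only: Un_iff mem_Collect_eq disj_assoc)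

lemma fam1_unit: "s \<in> {-1,1::real} \<Longrightarrow> (s *\<^sub>R axis i 1 :: real^4) \<bullet>  (s *\<^sub>R axis i 1) = 1"
  by (auto simp: inner_axis_axis)
lemma fam2_unit: "s1 \<in> {-1,1::real} \<Longrightarrow> s2 \<in> {-1,1::real} \<Longrightarrow> s3 \<in> {-1,1::real} \<Longrightarrow> s4 \<in> {-1,1::real} \<Longrightarrow>
   (vector [s1/2, s2/2, s3/2, s4/2] :: real^4) \<bullet> vector [s1/2, s2/2, s3/2, s4/2] = 1"
  by (auto simp: inner_vec_def sum_4)
lemma fam3_unit: assumes "pr t t'" "s1 \<in> {-1,1::real}" "s2 \<in> {-1,1::real}" "s3 \<in> {-1,1::real}"
        "p permutes (UNIV :: 4 set)"
  shows "(\<chi> i. (vector [0, s1/2, s2*t'/2, s3*t/2] :: real^4) $ p i) \<bullet> (\<chi> i. (vector [0, s1/2, s2*t'/2, s3*t/2] :: real^4) $ p i) = 1"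
proof -
  have sq: "t' = 1 - t \<and> t * t = t + 1" using pr_sq[OF assms(1)] .
    let ?b = "(vector [0, s1/2, s2*t'/2, s3*t/2] :: real^4)"
    have "(\<chi> i. ?b $ p i) \<bullet> (\<chi> i. ?b $ p i) = (\<Sum>i\<in>UNIV. ?b $ p i * ?b $ p i)" by (simp add: inner_vec_def)
    also have "\<dots> = (\<Sum>i\<in>UNIV. ?b $ i * ?b $ i)"
      using sum.permute[OF assms(5), of "\<lambda>i. ?b $ i * ?b $ i"] by (simp add: o_def)
    also have "\<dots> = (s1* s1 + (s2* s2)*(t'*t') + (s3* s3)*(t*t))/4" by (simp add: sum_4 field_simps)
    also have "\<dots> = 1"
    proof -
      have "s1* s1 = 1" "s2* s2 = 1" "s3* s3 = 1" using assms(2-4) by auto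
      moreover have "t'*t' + t*t = 3"
      proof -
        have "t'*t' + t*t = (1-t)*(1-t) + t*t" using sq by simp
        also have "\<dots> = 1 - 2*t + 2*(t*t)" by (simp add: algebra_simps)
        also have "\<dots> = 3" using sq by simp
        finally show ?thesis .
      qed
      ultimately show ?thesis by simp
    qed
    finally show ?thesis .
qed

lemma Delta_unit: assumes "pr t t'" "a \<in> Delta t t'" shows "a \<bullet> a = 1"
  using Delta_disj[OF assms(2)]
  apply (elim disjE exE bexE conjE)
  using fam1_unit apply simp
  using fam2_unit apply simp
  using fam3_unit[OF assms(1)] apply simp
  done
lemma D_unit: "a \<in> D \<Longrightarrow> a \<bullet> a = 1"
  using D_cases Delta_unit by blast

inductive_set mon :: "('a \<Rightarrow> 'a) set \<Rightarrow> ('a \<Rightarrow> 'a) set" for S where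
  mid: "id \<in> mon S"
| mstep: "s \<in> S \<Longrightarrow> m \<in> mon S \<Longrightarrow> s \<circ> m \<in> mon S"

lemma mon_comp: "m1 \<in> mon S \<Longrightarrow> m2 \<in> mon S \<Longrightarrow> m1 \<circ> m2 \<in> mon S"
proof (induction m1 rule: mon.induct)
  case mid then show ?case by (simp only: id_o)
next
  case (mstep s m)
  show ?case using mon.mstep[OF mstep(1) mstep(3)[OF mstep(4)]] by (simp only: comp_assoc)
qed

lemma mon_inv: assumes inv: "\<And>s. s \<in> S \<Longrightarrow> s \<circ> s = id"
  shows "m \<in> mon S \<Longrightarrow> bij m \<and> inv m \<in> mon S"
proof (induction m rule: mon.induct)
  case mid then show ?case by (simp only: inv_id bij_id mon.mid simp_thms)
next
  case (mstep s m)
  have ss: "s \<circ> s = id" using inv mstep by blast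
  have bs: "bij s" using ss o_bij by blast
  have iss: "inv s = s" using ss inv_unique_comp by blast
  have b: "bij (s \<circ> m)" using bs mstep bij_comp by blast
  have e: "inv (s \<circ> m) = inv m \<circ> s" using o_inv_distrib bs mstep iss by metis
  have "s \<circ> id \<in> mon S" by (rule mon.mstep[OF mstep(1) mon.mid])
  then have "s \<in> mon S" by (simp only: o_id)
  then have "inv m \<circ> s \<in> mon S" using mon_comp mstep by blast
  then have "inv (s \<circ> m) \<in> mon S" using e by (simp only:)
  with b show ?case by blast
qed

lemma gen_sub_mon: assumes "\<And>s. s \<in> S \<Longrightarrow> s \<circ> s = id"
  shows "f \<in> gen_group S \<Longrightarrow> f \<in> mon S"
proof (induction f rule: gen_group.induct)
  case gen_id then show ?case by (rule mon.mid)
next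
  case (gen_gen f)
  have "f \<circ> id \<in> mon S" by (rule mon.mstep[OF gen_gen mon.mid])
  then show ?case by (simp only: o_id)
next
  case (gen_comp f g) then show ?case by (blast intro: mon_comp)
next
  case (gen_inv f) then show ?case using mon_inv[OF assms] by blast
qed

lemma mon_sub_gen: "f \<in> mon S \<Longrightarrow> f \<in> gen_group S"
proof (induction f rule: mon.induct)
  case mid then show ?case by (rule gen_id)
next
  case (mstep s m) then show ?case by (blast intro: gen_group.gen_comp gen_group.gen_gen)
qed

lemma gen_mono: assumes "S \<subseteq> T" shows "f \<in> gen_group S \<Longrightarrow> f \<in> gen_group T"
proof (induction f rule: gen_group.induct)
  case gen_id then show ?case by (rule gen_group.gen_id)
next
  case (gen_gen f) then show ?case using assms by (blast intro: gen_group.gen_gen)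
next
  case (gen_comp f g) then show ?case by (blast intro: gen_group.gen_comp)
next
  case (gen_inv f) then show ?case by (blast intro: gen_group.gen_inv)
qed

lemma gen_flat: "f \<in> gen_group (gen_group R \<union> T) \<Longrightarrow> f \<in> gen_group (R \<union> T)"
proof (induction f rule: gen_group.induct)
  case gen_id then show ?case by (rule gen_group.gen_id)
next
  case (gen_gen f) then show ?case using gen_mono[of R "R \<union> T"] gen_group.gen_gen[of f "R \<union> T"] by blast
next
  case (gen_comp f g) then show ?case by (blast intro: gen_group.gen_comp)
next
  case (gen_inv f) then show ?case by (blast intro: gen_group.gen_inv)
qed


abbreviation G3 :: "(real^4 \<Rightarrow> real^4) set" where "G3 \<equiv> gen_group (Hinf3 \<union> {iota})"
definition Cj :: "real^4 \<Rightarrow> real^4 \<Rightarrow> real^4" where "Cj u = (\<lambda>x. qmul (qmul u x) (qcnj u))"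
definition Wq :: "(real^4) set" where "Wq = {u. Cj u \<in> G3 \<and> Cj (qcnj u) \<in> G3}"

lemma Cj_mul: "Cj (qmul u v) = Cj u \<circ> Cj v"
  by (rule ext) (simp add: Cj_def qcnj_mul qassoc)
lemma Cj_neg: "Cj (-u) = Cj u"
  by (rule ext) (simp add: Cj_def)
lemma qcnj_one[simp]: "qcnj one4 = one4" by (simp add: qs)
lemma Cj_one: "Cj one4 = id"
  by (rule ext) (simp add: Cj_def)

lemma G3_comp: "f \<in> G3 \<Longrightarrow> g \<in> G3 \<Longrightarrow> f \<circ> g \<in> G3" by (rule gen_comp)
lemma G3_iota: "iota \<in> G3" by (rule gen_gen) simp
lemma G3_refl: "a \<in> DV \<Longrightarrow> refl_map a \<in> G3"
  unfolding Hinf3_def DV_def by (rule gen_gen) (blast intro: gen_gen)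

lemma W_mul: "u \<in> Wq \<Longrightarrow> v \<in> Wq \<Longrightarrow> qmul u v \<in> Wq"
  unfolding Wq_def by (simp add: Cj_mul qcnj_mul gen_comp)
lemma W_neg: "u \<in> Wq \<Longrightarrow> - u \<in> Wq"
  unfolding Wq_def by (simp add: Cj_neg)
lemma W_cnj: "u \<in> Wq \<Longrightarrow> qcnj u \<in> Wq"
  unfolding Wq_def by simp
lemma W_one: "one4 \<in> Wq"
  unfolding Wq_def by (simp add: Cj_one gen_id)

lemma axis_D: "(axis k 1 :: real^4) \<in> DeltaP"
proof -
  have "axis k 1 = (1::real) *\<^sub>R axis k 1" by simp
  then show ?thesis unfolding DeltaP_def Delta_def
    by (intro UnI1 CollectI exI[where x=k] bexI[where x="1::real"]) simp_all
qed
lemma axis_DV: "k \<noteq> 1 \<Longrightarrow> (axis k 1 :: real^4) \<in> DV"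
  using axis_D by (simp add: DV_def Vsub_def axis_def)

lemma qcnj_refl: "qcnj = refl_map (axis 2 1) \<circ> refl_map (axis 3 1) \<circ> refl_map (axis 4 1)"
  by (rule ext) (simp add: qs axis_def)
lemma G3_qcnj: "qcnj \<in> G3"
  unfolding qcnj_refl by (intro G3_comp G3_refl axis_DV) simp_all

lemma W_pure: assumes "a \<in> DV" shows "a \<in> Wq"
proof -
  have aD: "a \<in> D" "a $ 1 = 0" using DV_D[OF assms] by auto
  have u: "a \<bullet> a = 1" using D_unit aD by blast
  have c: "qcnj a = - a" using aD(2) by (simp add: qs)
  have "Cj a = refl_map a \<circ> qcnj"
    by (rule ext) (simp add: Cj_def refl_q[OF u] c)
  moreover have "refl_map a \<circ> qcnj \<in> G3" by (intro G3_comp G3_refl[OF assms] G3_qcnj)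
  ultimately have "Cj a \<in> G3" by simp
  then show ?thesis unfolding Wq_def by (simp add: c Cj_neg)
qed

lemma iota_Cj: "iota \<circ> Cj w \<circ> iota = Cj (qcnj (iota w))"
  by (rule ext) (simp add: Cj_def iota_mul iota_cnj qassoc)
lemma W_iota: assumes "u \<in> Wq" shows "iota u \<in> Wq"
proof -
  have u1: "Cj u \<in> G3" "Cj (qcnj u) \<in> G3" using assms unfolding Wq_def by auto
  have "iota \<circ> Cj u \<circ> iota \<in> G3" by (intro G3_comp G3_iota u1)
  then have a: "Cj (qcnj (iota u)) \<in> G3" by (simp only: iota_Cj)
  have "iota \<circ> Cj (qcnj u) \<circ> iota \<in> G3" by (intro G3_comp G3_iota u1)
  then have b: "Cj (iota u) \<in> G3" by (simp only: iota_Cj iota_cnj qcnj_cnj)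
  show ?thesis using a b unfolding Wq_def by simp
qed

lemma Delta3I: assumes "e1 \<in> {-1,1::real}" "e2 \<in> {-1,1::real}" "e3 \<in> {-1,1::real}"
  "p permutes (UNIV :: 4 set)" "evenperm p"
  "v = (\<chi> i. (vector [0, e1/2, e2*t'/2, e3*t/2] :: real^4) $ p i)"
  shows "v \<in> Delta t t'"
  unfolding Delta_def
  apply (rule UnI2, rule CollectI)
  apply (rule bexI[OF _ assms(1)], rule bexI[OF _ assms(2)], rule bexI[OF _ assms(3)])
  using assms(4-6) by blast

lemma pd_gen: assumes "pr t t'" "e1 \<in> {-1,1::real}" "e2 \<in> {-1,1::real}" "e3 \<in> {-1,1::real}"
  "p permutes (UNIV :: 4 set)" "evenperm p" "p 1 = 1"
  "v = (\<chi> i. (vector [0, e1/2, e2*t'/2, e3*t/2] :: real^4) $ p i)"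
  shows "v \<in> Wq"
proof -
  have "v \<in> Delta t t'" by (rule Delta3I[OF assms(2-6) assms(8)])
  moreover have "v $ 1 = 0" using assms(7,8) by simp
  ultimately show ?thesis using pr_DV[OF assms(1)] W_pure by blast
qed


lemma perm_facts:
  "(Transposition.transpose 3 4 \<circ> Transposition.transpose 2 3) permutes (UNIV :: 4 set)"
  "evenperm (Transposition.transpose 3 4 \<circ> Transposition.transpose 2 (3::4))"
  "(Transposition.transpose 2 3 \<circ> Transposition.transpose 3 4) permutes (UNIV :: 4 set)"
  "evenperm (Transposition.transpose 2 3 \<circ> Transposition.transpose 3 (4::4))"
  by (auto intro!: permutes_compose permutes_swap_id
      simp: evenperm_comp permutation_swap_id evenperm_swap)

lemma pd_A: assumes "pr t t'" "e1 \<in> {-1,1::real}" "e2 \<in> {-1,1::real}" "e3 \<in> {-1,1::real}"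
  shows "vector [0, e1*(1/2), e2*(t'/2), e3*(t/2)] \<in> Wq"
  by (rule pd_gen[OF assms permutes_id]) (simp_all add: vec_eq_iff forall_4)
lemma pd_B: assumes "pr t t'" "e1 \<in> {-1,1::real}" "e2 \<in> {-1,1::real}" "e3 \<in> {-1,1::real}"
  shows "vector [0, e3*(t/2), e1*(1/2), e2*(t'/2)] \<in> Wq"
  by (rule pd_gen[OF assms perm_facts(1,2)]) (simp_all add: vec_eq_iff forall_4 Transposition.transpose_def)
lemma pd_C: assumes "pr t t'" "e1 \<in> {-1,1::real}" "e2 \<in> {-1,1::real}" "e3 \<in> {-1,1::real}"
  shows "vector [0, e2*(t'/2), e3*(t/2), e1*(1/2)] \<in> Wq"
  by (rule pd_gen[OF assms perm_facts(3,4)]) (simp_all add: vec_eq_iff forall_4 Transposition.transpose_def)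


lemma arr_1234: assumes h: "pr t t'" shows "vector [0, 1/2, t'/2, t/2] \<in> Wq"
proof -
  have hs: "pr t' t" using pr_sym[OF h] .
  have "vector [0, (1)*(1/2), (1)*(t'/2), (1)*(t/2)] \<in> Wq" by (rule pd_A[OF h]) simp_all
  then show ?thesis by simp
qed

lemma arr_1243: assumes h: "pr t t'" shows "vector [0, 1/2, t/2, t'/2] \<in> Wq"
proof -
  have hs: "pr t' t" using pr_sym[OF h] .
  have "vector [0, (1)*(1/2), (1)*(t/2), (1)*(t'/2)] \<in> Wq" by (rule pd_A[OF hs]) simp_all
  then show ?thesis by simp
qed

lemma arr_1324: assumes h: "pr t t'" shows "vector [0, t'/2, 1/2, t/2] \<in> Wq"
proof -
  have hs: "pr t' t" using pr_sym[OF h] .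
  have "vector [0, (1)*(t'/2), (1)*(1/2), (1)*(t/2)] \<in> Wq" by (rule pd_B[OF hs]) simp_all
  then show ?thesis by simp
qed

lemma arr_1342: assumes h: "pr t t'" shows "vector [0, t'/2, t/2, 1/2] \<in> Wq"
proof -
  have hs: "pr t' t" using pr_sym[OF h] .
  have "vector [0, (1)*(t'/2), (1)*(t/2), (1)*(1/2)] \<in> Wq" by (rule pd_C[OF h]) simp_all
  then show ?thesis by simp
qed

lemma arr_1423: assumes h: "pr t t'" shows "vector [0, t/2, 1/2, t'/2] \<in> Wq"
proof -
  have hs: "pr t' t" using pr_sym[OF h] .
  have "vector [0, (1)*(t/2), (1)*(1/2), (1)*(t'/2)] \<in> Wq" by (rule pd_B[OF h]) simp_all
  then show ?thesis by simp
qed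

lemma arr_1432: assumes h: "pr t t'" shows "vector [0, t/2, t'/2, 1/2] \<in> Wq"
proof -
  have hs: "pr t' t" using pr_sym[OF h] .
  have "vector [0, (1)*(t/2), (1)*(t'/2), (1)*(1/2)] \<in> Wq" by (rule pd_C[OF hs]) simp_all
  then show ?thesis by simp
qed

lemma arr_2134: assumes h: "pr t t'" shows "vector [1/2, 0, t'/2, t/2] \<in> Wq"
proof -
  have hs: "pr t' t" using pr_sym[OF h] .
  have P: "vector [0, (1)*(1/2), (-1)*(t/2), (1)*(t'/2)] \<in> Wq" by (rule pd_A[OF hs]) simp_all
  have Q: "vector [0, (1)*(1/2), (1)*(t/2), (-1)*(t'/2)] \<in> Wq" by (rule pd_A[OF hs]) simp_all
  have e: "vector [1/2, 0, t'/2, t/2] = qmul (vector [0, (1)*(1/2), (-1)*(t/2), (1)*(t'/2)]) (vector [0, (1)*(1/2), (1)*(t/2), (-1)*(t'/2)])"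
  proof -
    obtain e1: "t' = 1 - t" and e2: "t*t = t+1" using pr_sq[OF h] by blast
    show ?thesis unfolding e1 using e2 unfolding vec_eq_iff forall_4 qmul_def
      by (simp add: field_simps; (intro conjI)?; algebra)
  qed
  show ?thesis unfolding e by (rule W_mul[OF P Q])
qed

lemma arr_2143: assumes h: "pr t t'" shows "vector [1/2, 0, t/2, t'/2] \<in> Wq"
proof -
  have hs: "pr t' t" using pr_sym[OF h] .
  have P: "vector [0, (1)*(1/2), (-1)*(t'/2), (1)*(t/2)] \<in> Wq" by (rule pd_A[OF h]) simp_all
  have Q: "vector [0, (1)*(1/2), (1)*(t'/2), (-1)*(t/2)] \<in> Wq" by (rule pd_A[OF h]) simp_all
  have e: "vector [1/2, 0, t/2, t'/2] = qmul (vector [0, (1)*(1/2), (-1)*(t'/2), (1)*(t/2)]) (vector [0, (1)*(1/2), (1)*(t'/2), (-1)*(t/2)])"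
  proof -
    obtain e1: "t' = 1 - t" and e2: "t*t = t+1" using pr_sq[OF h] by blast
    show ?thesis unfolding e1 using e2 unfolding vec_eq_iff forall_4 qmul_def
      by (simp add: field_simps; (intro conjI)?; algebra)
  qed
  show ?thesis unfolding e by (rule W_mul[OF P Q])
qed

lemma arr_2314: assumes h: "pr t t'" shows "vector [1/2, t'/2, 0, t/2] \<in> Wq"
proof -
  have hs: "pr t' t" using pr_sym[OF h] .
  have P: "vector [0, (1)*(t/2), (1)*(1/2), (-1)*(t'/2)] \<in> Wq" by (rule pd_B[OF h]) simp_all
  have Q: "vector [0, (-1)*(t/2), (1)*(1/2), (1)*(t'/2)] \<in> Wq" by (rule pd_B[OF h]) simp_all
  have e: "vector [1/2, t'/2, 0, t/2] = qmul (vector [0, (1)*(t/2), (1)*(1/2), (-1)*(t'/2)]) (vector [0, (-1)*(t/2), (1)*(1/2), (1)*(t'/2)])"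
  proof -
    obtain e1: "t' = 1 - t" and e2: "t*t = t+1" using pr_sq[OF h] by blast
    show ?thesis unfolding e1 using e2 unfolding vec_eq_iff forall_4 qmul_def
      by (simp add: field_simps; (intro conjI)?; algebra)
  qed
  show ?thesis unfolding e by (rule W_mul[OF P Q])
qed

lemma arr_2341: assumes h: "pr t t'" shows "vector [1/2, t'/2, t/2, 0] \<in> Wq"
proof -
  have hs: "pr t' t" using pr_sym[OF h] .
  have P: "vector [0, (1)*(t/2), (-1)*(t'/2), (-1)*(1/2)] \<in> Wq" by (rule pd_C[OF hs]) simp_all
  have Q: "vector [0, (-1)*(t/2), (1)*(t'/2), (-1)*(1/2)] \<in> Wq" by (rule pd_C[OF hs]) simp_all
  have e: "vector [1/2, t'/2, t/2, 0] = qmul (vector [0, (1)*(t/2), (-1)*(t'/2), (-1)*(1/2)]) (vector [0, (-1)*(t/2), (1)*(t'/2), (-1)*(1/2)])"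
  proof -
    obtain e1: "t' = 1 - t" and e2: "t*t = t+1" using pr_sq[OF h] by blast
    show ?thesis unfolding e1 using e2 unfolding vec_eq_iff forall_4 qmul_def
      by (simp add: field_simps; (intro conjI)?; algebra)
  qed
  show ?thesis unfolding e by (rule W_mul[OF P Q])
qed

lemma arr_2413: assumes h: "pr t t'" shows "vector [1/2, t/2, 0, t'/2] \<in> Wq"
proof -
  have hs: "pr t' t" using pr_sym[OF h] .
  have P: "vector [0, (1)*(t'/2), (1)*(1/2), (-1)*(t/2)] \<in> Wq" by (rule pd_B[OF hs]) simp_all
  have Q: "vector [0, (-1)*(t'/2), (1)*(1/2), (1)*(t/2)] \<in> Wq" by (rule pd_B[OF hs]) simp_all
  have e: "vector [1/2, t/2, 0, t'/2] = qmul (vector [0, (1)*(t'/2), (1)*(1/2), (-1)*(t/2)]) (vector [0, (-1)*(t'/2), (1)*(1/2), (1)*(t/2)])"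
  proof -
    obtain e1: "t' = 1 - t" and e2: "t*t = t+1" using pr_sq[OF h] by blast
    show ?thesis unfolding e1 using e2 unfolding vec_eq_iff forall_4 qmul_def
      by (simp add: field_simps; (intro conjI)?; algebra)
  qed
  show ?thesis unfolding e by (rule W_mul[OF P Q])
qed

lemma arr_2431: assumes h: "pr t t'" shows "vector [1/2, t/2, t'/2, 0] \<in> Wq"
proof -
  have hs: "pr t' t" using pr_sym[OF h] .
  have P: "vector [0, (1)*(t'/2), (-1)*(t/2), (-1)*(1/2)] \<in> Wq" by (rule pd_C[OF h]) simp_all
  have Q: "vector [0, (-1)*(t'/2), (1)*(t/2), (-1)*(1/2)] \<in> Wq" by (rule pd_C[OF h]) simp_all
  have e: "vector [1/2, t/2, t'/2, 0] = qmul (vector [0, (1)*(t'/2), (-1)*(t/2), (-1)*(1/2)]) (vector [0, (-1)*(t'/2), (1)*(t/2), (-1)*(1/2)])"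
  proof -
    obtain e1: "t' = 1 - t" and e2: "t*t = t+1" using pr_sq[OF h] by blast
    show ?thesis unfolding e1 using e2 unfolding vec_eq_iff forall_4 qmul_def
      by (simp add: field_simps; (intro conjI)?; algebra)
  qed
  show ?thesis unfolding e by (rule W_mul[OF P Q])
qed

lemma arr_3124: assumes h: "pr t t'" shows "vector [t'/2, 0, 1/2, t/2] \<in> Wq"
proof -
  have hs: "pr t' t" using pr_sym[OF h] .
  have P: "vector [0, (1)*(t'/2), (-1)*(t/2), (1)*(1/2)] \<in> Wq" by (rule pd_C[OF h]) simp_all
  have Q: "vector [0, (1)*(t/2), (-1)*(1/2), (-1)*(t'/2)] \<in> Wq" by (rule pd_B[OF h]) simp_all
  have e: "vector [t'/2, 0, 1/2, t/2] = qmul (vector [0, (1)*(t'/2), (-1)*(t/2), (1)*(1/2)]) (vector [0, (1)*(t/2), (-1)*(1/2), (-1)*(t'/2)])"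
  proof -
    obtain e1: "t' = 1 - t" and e2: "t*t = t+1" using pr_sq[OF h] by blast
    show ?thesis unfolding e1 using e2 unfolding vec_eq_iff forall_4 qmul_def
      by (simp add: field_simps; (intro conjI)?; algebra)
  qed
  show ?thesis unfolding e by (rule W_mul[OF P Q])
qed

lemma arr_3142: assumes h: "pr t t'" shows "vector [t'/2, 0, t/2, 1/2] \<in> Wq"
proof -
  have hs: "pr t' t" using pr_sym[OF h] .
  have P: "vector [0, (1)*(t'/2), (-1)*(1/2), (1)*(t/2)] \<in> Wq" by (rule pd_B[OF hs]) simp_all
  have Q: "vector [0, (1)*(t/2), (1)*(t'/2), (1)*(1/2)] \<in> Wq" by (rule pd_C[OF hs]) simp_all
  have e: "vector [t'/2, 0, t/2, 1/2] = qmul (vector [0, (1)*(t'/2), (-1)*(1/2), (1)*(t/2)]) (vector [0, (1)*(t/2), (1)*(t'/2), (1)*(1/2)])"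
  proof -
    obtain e1: "t' = 1 - t" and e2: "t*t = t+1" using pr_sq[OF h] by blast
    show ?thesis unfolding e1 using e2 unfolding vec_eq_iff forall_4 qmul_def
      by (simp add: field_simps; (intro conjI)?; algebra)
  qed
  show ?thesis unfolding e by (rule W_mul[OF P Q])
qed

lemma arr_3214: assumes h: "pr t t'" shows "vector [t'/2, 1/2, 0, t/2] \<in> Wq"
proof -
  have hs: "pr t' t" using pr_sym[OF h] .
  have P: "vector [0, (1)*(1/2), (1)*(t/2), (1)*(t'/2)] \<in> Wq" by (rule pd_A[OF hs]) simp_all
  have Q: "vector [0, (-1)*(1/2), (1)*(t/2), (-1)*(t'/2)] \<in> Wq" by (rule pd_A[OF hs]) simp_all
  have e: "vector [t'/2, 1/2, 0, t/2] = qmul (vector [0, (1)*(1/2), (1)*(t/2), (1)*(t'/2)]) (vector [0, (-1)*(1/2), (1)*(t/2), (-1)*(t'/2)])"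
  proof -
    obtain e1: "t' = 1 - t" and e2: "t*t = t+1" using pr_sq[OF h] by blast
    show ?thesis unfolding e1 using e2 unfolding vec_eq_iff forall_4 qmul_def
      by (simp add: field_simps; (intro conjI)?; algebra)
  qed
  show ?thesis unfolding e by (rule W_mul[OF P Q])
qed

lemma arr_3241: assumes h: "pr t t'" shows "vector [t'/2, 1/2, t/2, 0] \<in> Wq"
proof -
  have hs: "pr t' t" using pr_sym[OF h] .
  have P: "vector [0, (1)*(1/2), (1)*(t'/2), (1)*(t/2)] \<in> Wq" by (rule pd_A[OF h]) simp_all
  have Q: "vector [0, (1)*(t/2), (-1)*(1/2), (1)*(t'/2)] \<in> Wq" by (rule pd_B[OF h]) simp_all
  have e: "vector [t'/2, 1/2, t/2, 0] = qmul (vector [0, (1)*(1/2), (1)*(t'/2), (1)*(t/2)]) (vector [0, (1)*(t/2), (-1)*(1/2), (1)*(t'/2)])"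
  proof -
    obtain e1: "t' = 1 - t" and e2: "t*t = t+1" using pr_sq[OF h] by blast
    show ?thesis unfolding e1 using e2 unfolding vec_eq_iff forall_4 qmul_def
      by (simp add: field_simps; (intro conjI)?; algebra)
  qed
  show ?thesis unfolding e by (rule W_mul[OF P Q])
qed

lemma arr_3412: assumes h: "pr t t'" shows "vector [t'/2, t/2, 0, 1/2] \<in> Wq"
proof -
  have hs: "pr t' t" using pr_sym[OF h] .
  have P: "vector [0, (1)*(1/2), (1)*(t'/2), (-1)*(t/2)] \<in> Wq" by (rule pd_A[OF h]) simp_all
  have Q: "vector [0, (-1)*(t'/2), (1)*(t/2), (-1)*(1/2)] \<in> Wq" by (rule pd_C[OF h]) simp_all
  have e: "vector [t'/2, t/2, 0, 1/2] = qmul (vector [0, (1)*(1/2), (1)*(t'/2), (-1)*(t/2)]) (vector [0, (-1)*(t'/2), (1)*(t/2), (-1)*(1/2)])"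
  proof -
    obtain e1: "t' = 1 - t" and e2: "t*t = t+1" using pr_sq[OF h] by blast
    show ?thesis unfolding e1 using e2 unfolding vec_eq_iff forall_4 qmul_def
      by (simp add: field_simps; (intro conjI)?; algebra)
  qed
  show ?thesis unfolding e by (rule W_mul[OF P Q])
qed

lemma arr_3421: assumes h: "pr t t'" shows "vector [t'/2, t/2, 1/2, 0] \<in> Wq"
proof -
  have hs: "pr t' t" using pr_sym[OF h] .
  have P: "vector [0, (1)*(1/2), (-1)*(t/2), (-1)*(t'/2)] \<in> Wq" by (rule pd_A[OF hs]) simp_all
  have Q: "vector [0, (-1)*(t'/2), (-1)*(1/2), (-1)*(t/2)] \<in> Wq" by (rule pd_B[OF hs]) simp_all
  have e: "vector [t'/2, t/2, 1/2, 0] = qmul (vector [0, (1)*(1/2), (-1)*(t/2), (-1)*(t'/2)]) (vector [0, (-1)*(t'/2), (-1)*(1/2), (-1)*(t/2)])"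
  proof -
    obtain e1: "t' = 1 - t" and e2: "t*t = t+1" using pr_sq[OF h] by blast
    show ?thesis unfolding e1 using e2 unfolding vec_eq_iff forall_4 qmul_def
      by (simp add: field_simps; (intro conjI)?; algebra)
  qed
  show ?thesis unfolding e by (rule W_mul[OF P Q])
qed

lemma arr_4123: assumes h: "pr t t'" shows "vector [t/2, 0, 1/2, t'/2] \<in> Wq"
proof -
  have hs: "pr t' t" using pr_sym[OF h] .
  have P: "vector [0, (1)*(t'/2), (1)*(1/2), (1)*(t/2)] \<in> Wq" by (rule pd_B[OF hs]) simp_all
  have Q: "vector [0, (1)*(t/2), (1)*(t'/2), (-1)*(1/2)] \<in> Wq" by (rule pd_C[OF hs]) simp_all
  have e: "vector [t/2, 0, 1/2, t'/2] = qmul (vector [0, (1)*(t'/2), (1)*(1/2), (1)*(t/2)]) (vector [0, (1)*(t/2), (1)*(t'/2), (-1)*(1/2)])"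
  proof -
    obtain e1: "t' = 1 - t" and e2: "t*t = t+1" using pr_sq[OF h] by blast
    show ?thesis unfolding e1 using e2 unfolding vec_eq_iff forall_4 qmul_def
      by (simp add: field_simps; (intro conjI)?; algebra)
  qed
  show ?thesis unfolding e by (rule W_mul[OF P Q])
qed

lemma arr_4132: assumes h: "pr t t'" shows "vector [t/2, 0, t'/2, 1/2] \<in> Wq"
proof -
  have hs: "pr t' t" using pr_sym[OF h] .
  have P: "vector [0, (1)*(t'/2), (1)*(t/2), (1)*(1/2)] \<in> Wq" by (rule pd_C[OF h]) simp_all
  have Q: "vector [0, (1)*(t'/2), (-1)*(t/2), (-1)*(1/2)] \<in> Wq" by (rule pd_C[OF h]) simp_all
  have e: "vector [t/2, 0, t'/2, 1/2] = qmul (vector [0, (1)*(t'/2), (1)*(t/2), (1)*(1/2)]) (vector [0, (1)*(t'/2), (-1)*(t/2), (-1)*(1/2)])"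
  proof -
    obtain e1: "t' = 1 - t" and e2: "t*t = t+1" using pr_sq[OF h] by blast
    show ?thesis unfolding e1 using e2 unfolding vec_eq_iff forall_4 qmul_def
      by (simp add: field_simps; (intro conjI)?; algebra)
  qed
  show ?thesis unfolding e by (rule W_mul[OF P Q])
qed

lemma arr_4213: assumes h: "pr t t'" shows "vector [t/2, 1/2, 0, t'/2] \<in> Wq"
proof -
  have hs: "pr t' t" using pr_sym[OF h] .
  have P: "vector [0, (1)*(1/2), (1)*(t'/2), (1)*(t/2)] \<in> Wq" by (rule pd_A[OF h]) simp_all
  have Q: "vector [0, (-1)*(1/2), (1)*(t'/2), (-1)*(t/2)] \<in> Wq" by (rule pd_A[OF h]) simp_all
  have e: "vector [t/2, 1/2, 0, t'/2] = qmul (vector [0, (1)*(1/2), (1)*(t'/2), (1)*(t/2)]) (vector [0, (-1)*(1/2), (1)*(t'/2), (-1)*(t/2)])"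
  proof -
    obtain e1: "t' = 1 - t" and e2: "t*t = t+1" using pr_sq[OF h] by blast
    show ?thesis unfolding e1 using e2 unfolding vec_eq_iff forall_4 qmul_def
      by (simp add: field_simps; (intro conjI)?; algebra)
  qed
  show ?thesis unfolding e by (rule W_mul[OF P Q])
qed

lemma arr_4231: assumes h: "pr t t'" shows "vector [t/2, 1/2, t'/2, 0] \<in> Wq"
proof -
  have hs: "pr t' t" using pr_sym[OF h] .
  have P: "vector [0, (1)*(1/2), (1)*(t/2), (1)*(t'/2)] \<in> Wq" by (rule pd_A[OF hs]) simp_all
  have Q: "vector [0, (1)*(t'/2), (-1)*(1/2), (1)*(t/2)] \<in> Wq" by (rule pd_B[OF hs]) simp_all
  have e: "vector [t/2, 1/2, t'/2, 0] = qmul (vector [0, (1)*(1/2), (1)*(t/2), (1)*(t'/2)]) (vector [0, (1)*(t'/2), (-1)*(1/2), (1)*(t/2)])"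
  proof -
    obtain e1: "t' = 1 - t" and e2: "t*t = t+1" using pr_sq[OF h] by blast
    show ?thesis unfolding e1 using e2 unfolding vec_eq_iff forall_4 qmul_def
      by (simp add: field_simps; (intro conjI)?; algebra)
  qed
  show ?thesis unfolding e by (rule W_mul[OF P Q])
qed

lemma arr_4312: assumes h: "pr t t'" shows "vector [t/2, t'/2, 0, 1/2] \<in> Wq"
proof -
  have hs: "pr t' t" using pr_sym[OF h] .
  have P: "vector [0, (1)*(1/2), (1)*(t/2), (-1)*(t'/2)] \<in> Wq" by (rule pd_A[OF hs]) simp_all
  have Q: "vector [0, (-1)*(t/2), (1)*(t'/2), (-1)*(1/2)] \<in> Wq" by (rule pd_C[OF hs]) simp_all
  have e: "vector [t/2, t'/2, 0, 1/2] = qmul (vector [0, (1)*(1/2), (1)*(t/2), (-1)*(t'/2)]) (vector [0, (-1)*(t/2), (1)*(t'/2), (-1)*(1/2)])"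
  proof -
    obtain e1: "t' = 1 - t" and e2: "t*t = t+1" using pr_sq[OF h] by blast
    show ?thesis unfolding e1 using e2 unfolding vec_eq_iff forall_4 qmul_def
      by (simp add: field_simps; (intro conjI)?; algebra)
  qed
  show ?thesis unfolding e by (rule W_mul[OF P Q])
qed

lemma arr_4321: assumes h: "pr t t'" shows "vector [t/2, t'/2, 1/2, 0] \<in> Wq"
proof -
  have hs: "pr t' t" using pr_sym[OF h] .
  have P: "vector [0, (1)*(1/2), (-1)*(t'/2), (-1)*(t/2)] \<in> Wq" by (rule pd_A[OF h]) simp_all
  have Q: "vector [0, (-1)*(t/2), (-1)*(1/2), (-1)*(t'/2)] \<in> Wq" by (rule pd_B[OF h]) simp_all
  have e: "vector [t/2, t'/2, 1/2, 0] = qmul (vector [0, (1)*(1/2), (-1)*(t'/2), (-1)*(t/2)]) (vector [0, (-1)*(t/2), (-1)*(1/2), (-1)*(t'/2)])"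
  proof -
    obtain e1: "t' = 1 - t" and e2: "t*t = t+1" using pr_sq[OF h] by blast
    show ?thesis unfolding e1 using e2 unfolding vec_eq_iff forall_4 qmul_def
      by (simp add: field_simps; (intro conjI)?; algebra)
  qed
  show ?thesis unfolding e by (rule W_mul[OF P Q])
qed

lemma omega_W: "vector [1/2, 1/2, 1/2, 1/2] \<in> Wq"
proof -
  have h: "pr tau tau'" by (simp add: pr_def)
  have hs: "pr tau' tau" by (simp add: pr_def)
  have P: "vector [0, (1)*(1/2), (-1)*(tau'/2), (-1)*(tau/2)] \<in> Wq" by (rule pd_A[OF h]) simp_all
  have Q: "vector [0, (-1)*(tau/2), (1)*(1/2), (-1)*(tau'/2)] \<in> Wq" by (rule pd_B[OF h]) simp_all
  have e: "vector [1/2, 1/2, 1/2, 1/2] = qmul (vector [0, (1)*(1/2), (-1)*(tau'/2), (-1)*(tau/2)]) (vector [0, (-1)*(tau/2), (1)*(1/2), (-1)*(tau'/2)])"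
  proof -
    obtain e1: "tau' = 1 - tau" and e2: "tau*tau = tau+1" using pr_sq[OF h] by blast
    show ?thesis unfolding e1 using e2 unfolding vec_eq_iff forall_4 qmul_def
      by (simp add: field_simps; (intro conjI)?; algebra)
  qed
  show ?thesis unfolding e by (rule W_mul[OF P Q])
qed



lemma SL1: assumes u: "u \<in> Wq" and e: "e2 \<in> {-1,1::real}" "e3 \<in> {-1,1::real}" "e4 \<in> {-1,1::real}"
  shows "vector [u$1, e2 * u$2, e3 * u$3, e4 * u$4] \<in> Wq"
proof -
  have i: "axis 2 1 \<in> Wq" "axis 3 1 \<in> Wq" "axis 4 1 \<in> Wq" by (simp_all add: W_pure axis_DV)
  have ci: "qmul (qmul (axis 2 1) u) (qcnj (axis 2 1)) \<in> Wq"
       "qmul (qmul (axis 3 1) u) (qcnj (axis 3 1)) \<in> Wq"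
       "qmul (qmul (axis 4 1) u) (qcnj (axis 4 1)) \<in> Wq"
    by (intro W_mul W_cnj i u)+
  have f0: "vector [u$1, u$2, u$3, u$4] \<in> Wq"
  proof -
    have "vector [u$1, u$2, u$3, u$4] = u" by (simp add: vec_eq_iff forall_4)
    then show ?thesis using u by simp
  qed
  have f1: "vector [u$1, u$2, -u$3, -u$4] \<in> Wq"
  proof -
    have "vector [u$1, u$2, -u$3, -u$4] = qmul (qmul (axis 2 1) u) (qcnj (axis 2 1))" by (simp add: qs axis_def)
    then show ?thesis using ci by simp
  qed
  have f2: "vector [u$1, -u$2, u$3, -u$4] \<in> Wq"
  proof -
    have "vector [u$1, -u$2, u$3, -u$4] = qmul (qmul (axis 3 1) u) (qcnj (axis 3 1))" by (simp add: qs axis_def)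
    then show ?thesis using ci by simp
  qed
  have f3: "vector [u$1, -u$2, -u$3, u$4] \<in> Wq"
  proof -
    have "vector [u$1, -u$2, -u$3, u$4] = qmul (qmul (axis 4 1) u) (qcnj (axis 4 1))" by (simp add: qs axis_def)
    then show ?thesis using ci by simp
  qed
  have f4: "vector [u$1, -u$2, -u$3, -u$4] \<in> Wq"
  proof -
    have "vector [u$1, -u$2, -u$3, -u$4] = qcnj u" by (simp add: qs)
    then show ?thesis using W_cnj[OF u] by simp
  qed
  have f5: "vector [u$1, -u$2, u$3, u$4] \<in> Wq"
  proof -
    have "vector [u$1, -u$2, u$3, u$4] = qcnj (qmul (qmul (axis 2 1) u) (qcnj (axis 2 1)))" by (simp add: qs axis_def)
    then show ?thesis using W_cnj[OF ci(1)] by simp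
  qed
  have f6: "vector [u$1, u$2, -u$3, u$4] \<in> Wq"
  proof -
    have "vector [u$1, u$2, -u$3, u$4] = qcnj (qmul (qmul (axis 3 1) u) (qcnj (axis 3 1)))" by (simp add: qs axis_def)
    then show ?thesis using W_cnj[OF ci(2)] by simp
  qed
  have f7: "vector [u$1, u$2, u$3, -u$4] \<in> Wq"
  proof -
    have "vector [u$1, u$2, u$3, -u$4] = qcnj (qmul (qmul (axis 4 1) u) (qcnj (axis 4 1)))" by (simp add: qs axis_def)
    then show ?thesis using W_cnj[OF ci(3)] by simp
  qed
  from e show ?thesis using f0 f1 f2 f3 f4 f5 f6 f7 by auto
qed

lemma SL: assumes u: "u \<in> Wq" and e: "e1 \<in> {-1,1::real}" "e2 \<in> {-1,1::real}" "e3 \<in> {-1,1::real}" "e4 \<in> {-1,1::real}"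
  shows "vector [e1 * u$1, e2 * u$2, e3 * u$3, e4 * u$4] \<in> Wq"
proof (cases "e1 = 1")
  case True then show ?thesis using SL1[OF u e(2-4)] by simp
next
  case False
  then have e1: "e1 = -1" using e(1) by auto
  have "- e2 \<in> {-1,1::real}" "- e3 \<in> {-1,1::real}" "- e4 \<in> {-1,1::real}" using e by auto
  from W_neg[OF SL1[OF u this]]
  have "- vector [u$1, - e2 * u$2, - e3 * u$3, - e4 * u$4] \<in> Wq" by simp
  moreover have "- (vector [u$1, - e2 * u$2, - e3 * u$3, - e4 * u$4] :: real^4) = vector [e1 * u$1, e2 * u$2, e3 * u$3, e4 * u$4]"
    unfolding vec_eq_iff forall_4 using e1 by simp
  ultimately show ?thesis by simp
qed


lemmas arrs = arr_1234 arr_1243 arr_1324 arr_1342 arr_1423 arr_1432 arr_2134 arr_2143 arr_2314 arr_2341 arr_2413 arr_2431 arr_3124 arr_3142 arr_3214 arr_3241 arr_3412 arr_3421 arr_4123 arr_4132 arr_4213 arr_4231 arr_4312 arr_4321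

lemma A0: assumes h: "pr t t'" and p: "p permutes (UNIV :: 4 set)"
  shows "(\<chi> i. (vector [0, 1/2, t'/2, t/2] :: real^4) $ p i) \<in> Wq"
proof -
  have inj: "inj p" using permutes_inj[OF p] .
  have d: "p 1 \<noteq> p 2" "p 1 \<noteq> p 3" "p 1 \<noteq> p 4" "p 2 \<noteq> p 3" "p 2 \<noteq> p 4" "p 3 \<noteq> p 4"
    by (simp_all add: inj_eq[OF inj])
  note ar = arrs[OF h]
  have "vector [(vector [0, 1/2, t'/2, t/2] :: real^4) $ p 1, (vector [0, 1/2, t'/2, t/2] :: real^4) $ p 2, (vector [0, 1/2, t'/2, t/2] :: real^4) $ p 3, (vector [0, 1/2, t'/2, t/2] :: real^4) $ p 4] \<in> Wq"
  proof -
    have "p 1 = 1 \<or> p 1 = 2 \<or> p 1 = 3 \<or> p 1 = 4" using exhaust_4[of "p 1"] d  by auto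
    then show ?thesis
    proof (elim disjE)
      assume h1: "p 1 = 1"
      have "p 2 = 2 \<or> p 2 = 3 \<or> p 2 = 4" using exhaust_4[of "p 2"] d h1 by auto
      then show ?thesis
      proof (elim disjE)
        assume h2: "p 2 = 2"
        have "p 3 = 3 \<or> p 3 = 4" using exhaust_4[of "p 3"] d h1 h2 by auto
        then show ?thesis
        proof (elim disjE)
          assume h3: "p 3 = 3"
          have h4: "p 4 = 4" using exhaust_4[of "p 4"] d h1 h2 h3 by auto
          show ?thesis by (simp add: h1 h2 h3 h4 ar)
        next
          assume h3: "p 3 = 4"
          have h4: "p 4 = 3" using exhaust_4[of "p 4"] d h1 h2 h3 by auto
          show ?thesis by (simp add: h1 h2 h3 h4 ar)
        qed
      next
        assume h2: "p 2 = 3"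
        have "p 3 = 2 \<or> p 3 = 4" using exhaust_4[of "p 3"] d h1 h2 by auto
        then show ?thesis
        proof (elim disjE)
          assume h3: "p 3 = 2"
          have h4: "p 4 = 4" using exhaust_4[of "p 4"] d h1 h2 h3 by auto
          show ?thesis by (simp add: h1 h2 h3 h4 ar)
        next
          assume h3: "p 3 = 4"
          have h4: "p 4 = 2" using exhaust_4[of "p 4"] d h1 h2 h3 by auto
          show ?thesis by (simp add: h1 h2 h3 h4 ar)
        qed
      next
        assume h2: "p 2 = 4"
        have "p 3 = 2 \<or> p 3 = 3" using exhaust_4[of "p 3"] d h1 h2 by auto
        then show ?thesis
        proof (elim disjE)
          assume h3: "p 3 = 2"
          have h4: "p 4 = 3" using exhaust_4[of "p 4"] d h1 h2 h3 by auto
          show ?thesis by (simp add: h1 h2 h3 h4 ar)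
        next
          assume h3: "p 3 = 3"
          have h4: "p 4 = 2" using exhaust_4[of "p 4"] d h1 h2 h3 by auto
          show ?thesis by (simp add: h1 h2 h3 h4 ar)
        qed
      qed
    next
      assume h1: "p 1 = 2"
      have "p 2 = 1 \<or> p 2 = 3 \<or> p 2 = 4" using exhaust_4[of "p 2"] d h1 by auto
      then show ?thesis
      proof (elim disjE)
        assume h2: "p 2 = 1"
        have "p 3 = 3 \<or> p 3 = 4" using exhaust_4[of "p 3"] d h1 h2 by auto
        then show ?thesis
        proof (elim disjE)
          assume h3: "p 3 = 3"
          have h4: "p 4 = 4" using exhaust_4[of "p 4"] d h1 h2 h3 by auto
          show ?thesis by (simp add: h1 h2 h3 h4 ar)
        next
          assume h3: "p 3 = 4"
          have h4: "p 4 = 3" using exhaust_4[of "p 4"] d h1 h2 h3 by auto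
          show ?thesis by (simp add: h1 h2 h3 h4 ar)
        qed
      next
        assume h2: "p 2 = 3"
        have "p 3 = 1 \<or> p 3 = 4" using exhaust_4[of "p 3"] d h1 h2 by auto
        then show ?thesis
        proof (elim disjE)
          assume h3: "p 3 = 1"
          have h4: "p 4 = 4" using exhaust_4[of "p 4"] d h1 h2 h3 by auto
          show ?thesis by (simp add: h1 h2 h3 h4 ar)
        next
          assume h3: "p 3 = 4"
          have h4: "p 4 = 1" using exhaust_4[of "p 4"] d h1 h2 h3 by auto
          show ?thesis by (simp add: h1 h2 h3 h4 ar)
        qed
      next
        assume h2: "p 2 = 4"
        have "p 3 = 1 \<or> p 3 = 3" using exhaust_4[of "p 3"] d h1 h2 by auto
        then show ?thesis
        proof (elim disjE)
          assume h3: "p 3 = 1"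
          have h4: "p 4 = 3" using exhaust_4[of "p 4"] d h1 h2 h3 by auto
          show ?thesis by (simp add: h1 h2 h3 h4 ar)
        next
          assume h3: "p 3 = 3"
          have h4: "p 4 = 1" using exhaust_4[of "p 4"] d h1 h2 h3 by auto
          show ?thesis by (simp add: h1 h2 h3 h4 ar)
        qed
      qed
    next
      assume h1: "p 1 = 3"
      have "p 2 = 1 \<or> p 2 = 2 \<or> p 2 = 4" using exhaust_4[of "p 2"] d h1 by auto
      then show ?thesis
      proof (elim disjE)
        assume h2: "p 2 = 1"
        have "p 3 = 2 \<or> p 3 = 4" using exhaust_4[of "p 3"] d h1 h2 by auto
        then show ?thesis
        proof (elim disjE)
          assume h3: "p 3 = 2"
          have h4: "p 4 = 4" using exhaust_4[of "p 4"] d h1 h2 h3 by auto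
          show ?thesis by (simp add: h1 h2 h3 h4 ar)
        next
          assume h3: "p 3 = 4"
          have h4: "p 4 = 2" using exhaust_4[of "p 4"] d h1 h2 h3 by auto
          show ?thesis by (simp add: h1 h2 h3 h4 ar)
        qed
      next
        assume h2: "p 2 = 2"
        have "p 3 = 1 \<or> p 3 = 4" using exhaust_4[of "p 3"] d h1 h2 by auto
        then show ?thesis
        proof (elim disjE)
          assume h3: "p 3 = 1"
          have h4: "p 4 = 4" using exhaust_4[of "p 4"] d h1 h2 h3 by auto
          show ?thesis by (simp add: h1 h2 h3 h4 ar)
        next
          assume h3: "p 3 = 4"
          have h4: "p 4 = 1" using exhaust_4[of "p 4"] d h1 h2 h3 by auto
          show ?thesis by (simp add: h1 h2 h3 h4 ar)
        qed
      next
        assume h2: "p 2 = 4"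
        have "p 3 = 1 \<or> p 3 = 2" using exhaust_4[of "p 3"] d h1 h2 by auto
        then show ?thesis
        proof (elim disjE)
          assume h3: "p 3 = 1"
          have h4: "p 4 = 2" using exhaust_4[of "p 4"] d h1 h2 h3 by auto
          show ?thesis by (simp add: h1 h2 h3 h4 ar)
        next
          assume h3: "p 3 = 2"
          have h4: "p 4 = 1" using exhaust_4[of "p 4"] d h1 h2 h3 by auto
          show ?thesis by (simp add: h1 h2 h3 h4 ar)
        qed
      qed
    next
      assume h1: "p 1 = 4"
      have "p 2 = 1 \<or> p 2 = 2 \<or> p 2 = 3" using exhaust_4[of "p 2"] d h1 by auto
      then show ?thesis
      proof (elim disjE)
        assume h2: "p 2 = 1"
        have "p 3 = 2 \<or> p 3 = 3" using exhaust_4[of "p 3"] d h1 h2 by auto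
        then show ?thesis
        proof (elim disjE)
          assume h3: "p 3 = 2"
          have h4: "p 4 = 3" using exhaust_4[of "p 4"] d h1 h2 h3 by auto
          show ?thesis by (simp add: h1 h2 h3 h4 ar)
        next
          assume h3: "p 3 = 3"
          have h4: "p 4 = 2" using exhaust_4[of "p 4"] d h1 h2 h3 by auto
          show ?thesis by (simp add: h1 h2 h3 h4 ar)
        qed
      next
        assume h2: "p 2 = 2"
        have "p 3 = 1 \<or> p 3 = 3" using exhaust_4[of "p 3"] d h1 h2 by auto
        then show ?thesis
        proof (elim disjE)
          assume h3: "p 3 = 1"
          have h4: "p 4 = 3" using exhaust_4[of "p 4"] d h1 h2 h3 by auto
          show ?thesis by (simp add: h1 h2 h3 h4 ar)
        next
          assume h3: "p 3 = 3"
          have h4: "p 4 = 1" using exhaust_4[of "p 4"] d h1 h2 h3 by auto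
          show ?thesis by (simp add: h1 h2 h3 h4 ar)
        qed
      next
        assume h2: "p 2 = 3"
        have "p 3 = 1 \<or> p 3 = 2" using exhaust_4[of "p 3"] d h1 h2 by auto
        then show ?thesis
        proof (elim disjE)
          assume h3: "p 3 = 1"
          have h4: "p 4 = 2" using exhaust_4[of "p 4"] d h1 h2 h3 by auto
          show ?thesis by (simp add: h1 h2 h3 h4 ar)
        next
          assume h3: "p 3 = 2"
          have h4: "p 4 = 1" using exhaust_4[of "p 4"] d h1 h2 h3 by auto
          show ?thesis by (simp add: h1 h2 h3 h4 ar)
        qed
      qed
    qed
  qed
  then show ?thesis by (simp only: vec_chi4)
qed


lemma K_fam3: assumes h: "pr t t'" and s: "s1 \<in> {-1,1::real}" "s2 \<in> {-1,1::real}" "s3 \<in> {-1,1::real}"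
  and p: "p permutes (UNIV :: 4 set)"
  shows "(\<chi> i. (vector [0, s1/2, s2*t'/2, s3*t/2] :: real^4) $ p i) \<in> Wq"
proof -
  define sg :: "real^4" where "sg = vector [1, s1, s2, s3]"
  define b0 :: "real^4" where "b0 = vector [0, 1/2, t'/2, t/2]"
  have sgm: "\<And>j. sg $ j \<in> {-1,1::real}"
  proof -
    fix j :: 4 show "sg $ j \<in> {-1,1::real}" using exhaust_4[of j] s unfolding sg_def by (elim disjE) simp_all
  qed
  have bj: "\<And>j. (vector [0, s1/2, s2*t'/2, s3*t/2] :: real^4) $ j = sg $ j * b0 $ j"
  proof -
    fix j :: 4 show "(vector [0, s1/2, s2*t'/2, s3*t/2] :: real^4) $ j = sg $ j * b0 $ j"
      using exhaust_4[of j] unfolding sg_def b0_def by (elim disjE) simp_all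
  qed
  have "(\<chi> i. (vector [0, s1/2, s2*t'/2, s3*t/2] :: real^4) $ p i)
      = vector [sg $ p 1 * (\<chi> i. b0 $ p i) $ 1, sg $ p 2 * (\<chi> i. b0 $ p i) $ 2,
                sg $ p 3 * (\<chi> i. b0 $ p i) $ 3, sg $ p 4 * (\<chi> i. b0 $ p i) $ 4]"
    by (simp add: vec_eq_iff forall_4 bj)
  moreover have "vector [sg $ p 1 * (\<chi> i. b0 $ p i) $ 1, sg $ p 2 * (\<chi> i. b0 $ p i) $ 2,
                sg $ p 3 * (\<chi> i. b0 $ p i) $ 3, sg $ p 4 * (\<chi> i. b0 $ p i) $ 4] \<in> Wq"
    by (rule SL[OF A0[OF h p, folded b0_def] sgm sgm sgm sgm])
  ultimately show ?thesis by simp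
qed

lemma K: assumes "a \<in> D" shows "a \<in> Wq"
proof -
  obtain t t' where h: "pr t t'" and a: "a \<in> Delta t t'" using D_cases[OF assms] by blast
  show ?thesis
    using Delta_disj[OF a]
  proof (elim disjE exE bexE conjE)
    fix i s assume s: "s \<in> {-1,1::real}" and e: "a = s *\<^sub>R axis i 1"
    show ?thesis
    proof (cases "i = 1")
      case True
      then show ?thesis using s e W_one W_neg[OF W_one] by auto
    next
      case False
      then have "a $ 1 = 0" using e by (simp add: axis_def)
      then show ?thesis using pr_DV[OF h a] W_pure by blast
    qed
  next
    fix s1 s2 s3 s4 assume s: "s1 \<in> {-1,1::real}" "s2 \<in> {-1,1::real}" "s3 \<in> {-1,1::real}" "s4 \<in> {-1,1::real}"
      and e: "a = vector [s1/2, s2/2, s3/2, s4/2]"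
    have "vector [s1 * (vector [1/2, 1/2, 1/2, 1/2] :: real^4) $ 1, s2 * (vector [1/2, 1/2, 1/2, 1/2] :: real^4) $ 2,
       s3 * (vector [1/2, 1/2, 1/2, 1/2] :: real^4) $ 3, s4 * (vector [1/2, 1/2, 1/2, 1/2] :: real^4) $ 4] \<in> Wq"
      by (rule SL[OF omega_W s])
    then show ?thesis using e by simp
  next
    fix s1 s2 s3 p assume s: "s1 \<in> {-1,1::real}" "s2 \<in> {-1,1::real}" "s3 \<in> {-1,1::real}"
      and p: "p permutes (UNIV :: 4 set)" and e: "a = (\<chi> i. (vector [0, s1/2, s2*t'/2, s3*t/2] :: real^4) $ p i)"
    show ?thesis unfolding e by (rule K_fam3[OF h s p])
  qed
qed



definition Lq :: "real^4 \<Rightarrow> real^4 \<Rightarrow> real^4" where "Lq w = (\<lambda>x. qmul w x)"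

lemma q_cancel1: "y \<bullet> y = 1 \<Longrightarrow> qmul (qmul X y) (qcnj y) = X"
  by (simp add: qassoc q_mul_cnj)
lemma q_cancel2: "y \<bullet> y = 1 \<Longrightarrow> qmul (qmul X (qcnj y)) y = X"
  by (simp add: qassoc q_cnj_mul)

lemma step_iota: assumes "w \<bullet> w = 1"
  shows "iota \<circ> Lq w = Lq (iota w) \<circ> (Cj (qcnj (iota w)) \<circ> iota)"
proof (rule ext)
  fix x
  have u: "iota w \<bullet> iota w = 1" using assms by (simp add: iota_inner)
  have "(Lq (iota w) \<circ> (Cj (qcnj (iota w)) \<circ> iota)) x
      = qmul (qmul (qmul (iota w) (qcnj (iota w))) (iota x)) (iota w)"
    by (simp add: Lq_def Cj_def qassoc)
  also have "\<dots> = qmul (iota x) (iota w)" using u by (simp add: q_mul_cnj)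
  also have "\<dots> = (iota \<circ> Lq w) x" by (simp add: Lq_def iota_mul)
  finally show "(iota \<circ> Lq w) x = (Lq (iota w) \<circ> (Cj (qcnj (iota w)) \<circ> iota)) x" by simp
qed

lemma step_refl: assumes a: "a \<bullet> a = 1" and w: "w \<bullet> w = 1"
  shows "refl_map a \<circ> Lq w = Lq (- qmul (qmul a (qcnj w)) a) \<circ> (Cj (qmul (qcnj a) w) \<circ> qcnj)"
proof (rule ext)
  fix x
  have "(Lq (- qmul (qmul a (qcnj w)) a) \<circ> (Cj (qmul (qcnj a) w) \<circ> qcnj)) x
     = - qmul (qmul (qmul (qmul (qmul (qmul (qmul a (qcnj w)) a) (qcnj a)) w) (qcnj x)) (qcnj w)) a"
    by (simp add: Lq_def Cj_def qcnj_mul qassoc)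
  also have "\<dots> = - qmul (qmul (qmul a (qcnj x)) (qcnj w)) a"
    using a w by (simp add: q_cancel1 q_cancel2)
  also have "\<dots> = (refl_map a \<circ> Lq w) x"
    by (simp add: Lq_def refl_q[OF a] qcnj_mul qassoc)
  finally show "(refl_map a \<circ> Lq w) x = (Lq (- qmul (qmul a (qcnj w)) a) \<circ> (Cj (qmul (qcnj a) w) \<circ> qcnj)) x"
    by simp
qed

abbreviation GS :: "(real^4 \<Rightarrow> real^4) set" where "GS \<equiv> refl_map ` D \<union> {iota}"

lemma Q_all: "m \<in> mon GS \<Longrightarrow> \<exists>w k. w \<in> Wq \<and> w \<bullet> w = 1 \<and> k \<in> G3 \<and> m = Lq w \<circ> k"
proof (induction m rule: mon.induct)
  case mid
  have "id = Lq one4 \<circ> id" by (rule ext) (simp add: Lq_def)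
  moreover have "one4 \<bullet> (one4 :: real^4) = 1" by simp
  ultimately show ?case using W_one gen_id by blast
next
  case (mstep s m)
  then obtain w k where w: "w \<in> Wq" "w \<bullet> w = 1" and k: "k \<in> G3" and m: "m = Lq w \<circ> k" by blast
  from mstep(1) show ?case
  proof
    assume "s \<in> refl_map ` D"
    then obtain a where aD: "a \<in> D" and s: "s = refl_map a" by blast
    have au: "a \<bullet> a = 1" using D_unit[OF aD] .
    have aW: "a \<in> Wq" using K[OF aD] .
    let ?w = "- qmul (qmul a (qcnj w)) a"
    let ?k = "(Cj (qmul (qcnj a) w) \<circ> qcnj) \<circ> k"
    have w1: "?w \<in> Wq" by (intro W_neg W_mul aW W_cnj w(1))
    have w2: "?w \<bullet> ?w = 1" using au w(2) by (simp add: q_norm_mul cnj_inner)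
    have "qmul (qcnj a) w \<in> Wq" by (intro W_mul W_cnj aW w(1))
    then have "Cj (qmul (qcnj a) w) \<in> G3" by (simp add: Wq_def)
    then have k1: "?k \<in> G3" by (intro G3_comp G3_qcnj k)
    have "s \<circ> m = Lq ?w \<circ> ?k" unfolding s m
      using step_refl[OF au w(2)] by (metis comp_assoc)
    then show ?thesis using w1 w2 k1 by blast
  next
    assume "s \<in> {iota}"
    then have s: "s = iota" by simp
    let ?w = "iota w"
    let ?k = "(Cj (qcnj (iota w)) \<circ> iota) \<circ> k"
    have w1: "?w \<in> Wq" by (rule W_iota[OF w(1)])
    have w2: "?w \<bullet> ?w = 1" using w(2) by (simp add: iota_inner)
    have "Cj (qcnj (iota w)) \<in> G3" using w1 by (simp add: Wq_def)
    then have k1: "?k \<in> G3" by (intro G3_comp G3_iota k)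
    have "s \<circ> m = Lq ?w \<circ> ?k" unfolding s m
      using step_iota[OF w(2)] by (metis comp_assoc)
    then show ?thesis using w1 w2 k1 by blast
  qed
qed

lemma Hinf_eq: "Hinf = gen_group (refl_map ` D)" by (simp add: Hinf_def D_def)
lemma Hinf3_eq: "Hinf3 = gen_group (refl_map ` DV)" by (simp add: Hinf3_def DV_def)

lemma G3_mon: "k \<in> G3 \<Longrightarrow> k \<in> mon (refl_map ` DV \<union> {iota})"
proof -
  assume "k \<in> G3"
  then have "k \<in> gen_group (refl_map ` DV \<union> {iota})" unfolding Hinf3_eq by (rule gen_flat)
  moreover have "\<And>s. s \<in> refl_map ` DV \<union> {iota} \<Longrightarrow> s \<circ> s = id"
  proof -
    fix s assume "s \<in> refl_map ` DV \<union> {iota}"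
    then show "s \<circ> s = id"
    proof
      assume "s \<in> refl_map ` DV"
      then obtain a where "a \<in> DV" "s = refl_map a" by blast
      moreover have "a \<bullet> a = 1" using D_unit DV_D \<open>a \<in> DV\<close> by blast
      ultimately show ?thesis by (auto simp: refl_invol)
    next
      assume "s \<in> {iota}" then show ?thesis by (auto simp: fun_eq_iff)
    qed
  qed
  ultimately show ?thesis using gen_sub_mon by blast
qed

lemma G3_fix: "k \<in> G3 \<Longrightarrow> k one4 = one4"
proof -
  assume "k \<in> G3"
  then have "k \<in> mon (refl_map ` DV \<union> {iota})" by (rule G3_mon)
  then show ?thesis
  proof (induction k rule: mon.induct)
    case mid then show ?case by simp
  next
    case (mstep s m)
    from mstep(1) have "s one4 = one4"
    proof
      assume "s \<in> refl_map ` DV"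
      then obtain a where a: "a \<in> DV" "s = refl_map a" by blast
      have "a $ 1 = 0" using DV_D[OF a(1)] by simp
      then have "one4 \<bullet> a = 0" by (simp add: inner_vec_def sum_4)
      then show ?thesis using a(2) by (simp add: refl_map_def)
    next
      assume "s \<in> {iota}" then show ?thesis by simp
    qed
    then show ?case using mstep by simp
  qed
qed

theorem mainTheorem12:
  shows "{g \<in> gen_group (Hinf \<union> {iota}). g (axis 1 1) = axis 1 1}
         = gen_group (Hinf3 \<union> {iota})"
proof
  show "{g \<in> gen_group (Hinf \<union> {iota}). g (axis 1 1) = axis 1 1} \<subseteq> gen_group (Hinf3 \<union> {iota})"
  proof
    fix g assume "g \<in> {g \<in> gen_group (Hinf \<union> {iota}). g (axis 1 1) = axis 1 1}"
    then have g: "g \<in> gen_group (Hinf \<union> {iota})" and gf: "g one4 = one4" by auto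
    have "g \<in> gen_group GS" using g unfolding Hinf_eq by (rule gen_flat)
    moreover have "\<And>s. s \<in> GS \<Longrightarrow> s \<circ> s = id"
    proof -
      fix s assume "s \<in> GS"
      then show "s \<circ> s = id"
      proof
        assume "s \<in> refl_map ` D"
        then obtain a where "a \<in> D" "s = refl_map a" by blast
        moreover have "a \<bullet> a = 1" using D_unit \<open>a \<in> D\<close> by blast
        ultimately show ?thesis by (auto simp: refl_invol)
      next
        assume "s \<in> {iota}" then show ?thesis by (auto simp: fun_eq_iff)
      qed
    qed
    ultimately have "g \<in> mon GS" using gen_sub_mon by blast
    then obtain w k where k: "k \<in> G3" and gw: "g = Lq w \<circ> k" using Q_all by blast
    have "g one4 = w" using G3_fix[OF k] gw by (simp add: Lq_def)
    then have "w = one4" using gf by simp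
    then have "g = k" using gw by (simp add: Lq_def fun_eq_iff)
    then show "g \<in> gen_group (Hinf3 \<union> {iota})" using k by simp
  qed
next
  show "gen_group (Hinf3 \<union> {iota}) \<subseteq> {g \<in> gen_group (Hinf \<union> {iota}). g (axis 1 1) = axis 1 1}"
  proof
    fix g assume g: "g \<in> gen_group (Hinf3 \<union> {iota})"
    have sub: "Hinf3 \<union> {iota} \<subseteq> Hinf \<union> {iota}"
    proof -
      have "refl_map ` DV \<subseteq> refl_map ` D" using DV_D by blast
      then have "Hinf3 \<subseteq> Hinf" unfolding Hinf_eq Hinf3_eq using gen_mono by blast
      then show ?thesis by blast
    qed
    have "g \<in> gen_group (Hinf \<union> {iota})" by (rule gen_mono[OF sub g])
    moreover have "g one4 = one4" by (rule G3_fix[OF g])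
    ultimately show "g \<in> {g \<in> gen_group (Hinf \<union> {iota}). g (axis 1 1) = axis 1 1}" by simp
  qed
qed


end
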